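(* Let $d=2$, $r>\frac32$, $\beta>0$, let $\eta$ be a complex-valued mean-zero function on $\Omega=[0,2\pi]^2$ with $\|\Lambda^{1/2}\eta\|_\beta<\infty$, and let $\mathbf u=(-R_2\eta,R_1\eta)$. Then $$|\langle \mathbf u\cdot\nabla\eta,\ \Lambda^{2r}e^{2\beta\Lambda}\eta\rangle|\le C\,2^rC_W(r)\,\|\eta\|_\beta\,\|\Lambda^{1/2}\eta\|_\beta^2,$$ with $C>0$ an absolute constant.
   Context: Periodic functions on $\Omega=[0,2\pi]^2$ with zero mean; $\langle\cdot,\cdot\rangle$ is the complex $L^2$ inner product. $\Lambda=(-\Delta)^{1/2}$ acts on Fourier coefficients by multiplication by $|\mathbf k|$; $R_j=\partial_j\Lambda^{-1}$ are the Riesz transforms (multiplier $ik_j/|\mathbf k|$). $\|\eta\|_\beta=\|\Lambda^re^{\beta\Lambda}\eta\|$, i.e. $\|\eta\|_\beta^2=(2\pi)^2\sum_{\mathbf k\ne0}|\mathbf k|^{2r}e^{2\beta|\mathbf k|}|\hat\eta(\mathbf k)|^2$. $C_W(r)=\frac{1}{2\pi}\frac{2r-2}{2r-3}$ (the general formula $\frac{1}{\pi2^{d-1}}\frac{2r-d}{2r-1-d}$ with $d=2$). *)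

theory Defs
  imports "HOL-Analysis.Analysis"
begin

text \<open>Periodic functions on [0,2pi]^2 are represented by their Fourier coefficients
  eta_hat :: int \<times> int \<Rightarrow> complex, with eta(x) = sum_k eta_hat(k) e^{i k.x}.
  Mean zero means eta_hat(0,0) = 0.\<close>

definition knorm :: "int \<times> int \<Rightarrow> real" where
  "knorm k = sqrt ((real_of_int (fst k))\<^sup>2 + (real_of_int (snd k))\<^sup>2)"

text \<open>Complex L2 inner product on the torus in Fourier variables (Parseval).\<close>
definition l2_inner :: "(int \<times> int \<Rightarrow> complex) \<Rightarrow> (int \<times> int \<Rightarrow> complex) \<Rightarrow> complex" where
  "l2_inner f g = complex_of_real ((2*pi)\<^sup>2) * (\<Sum>\<^sub>\<infinity>k. f k * cnj (g k))"

definition Lambda_pow :: "real \<Rightarrow> (int \<times> int \<Rightarrow> complex) \<Rightarrow> (int \<times> int \<Rightarrow> complex)" where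
  "Lambda_pow s f = (\<lambda>k. complex_of_real (knorm k powr s) * f k)"

definition exp_Lambda :: "real \<Rightarrow> (int \<times> int \<Rightarrow> complex) \<Rightarrow> (int \<times> int \<Rightarrow> complex)" where
  "exp_Lambda b f = (\<lambda>k. complex_of_real (exp (b * knorm k)) * f k)"

definition riesz1 :: "(int \<times> int \<Rightarrow> complex) \<Rightarrow> (int \<times> int \<Rightarrow> complex)" where
  "riesz1 f = (\<lambda>k. if k = (0,0) then 0 else \<i> * of_int (fst k) / complex_of_real (knorm k) * f k)"

definition riesz2 :: "(int \<times> int \<Rightarrow> complex) \<Rightarrow> (int \<times> int \<Rightarrow> complex)" where
  "riesz2 f = (\<lambda>k. if k = (0,0) then 0 else \<i> * of_int (snd k) / complex_of_real (knorm k) * f k)"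

definition partial1 :: "(int \<times> int \<Rightarrow> complex) \<Rightarrow> (int \<times> int \<Rightarrow> complex)" where
  "partial1 f = (\<lambda>k. \<i> * of_int (fst k) * f k)"

definition partial2 :: "(int \<times> int \<Rightarrow> complex) \<Rightarrow> (int \<times> int \<Rightarrow> complex)" where
  "partial2 f = (\<lambda>k. \<i> * of_int (snd k) * f k)"

text \<open>Fourier coefficients of a pointwise product = convolution of coefficients.\<close>
definition fconv :: "(int \<times> int \<Rightarrow> complex) \<Rightarrow> (int \<times> int \<Rightarrow> complex) \<Rightarrow> (int \<times> int \<Rightarrow> complex)" where
  "fconv f g = (\<lambda>k. \<Sum>\<^sub>\<infinity>j. f j * g (fst k - fst j, snd k - snd j))"

definition advect :: "(int \<times> int \<Rightarrow> complex) \<Rightarrow> (int \<times> int \<Rightarrow> complex) \<Rightarrow> (int \<times> int \<Rightarrow> complex) \<Rightarrow> (int \<times> int \<Rightarrow> complex)" where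
  "advect u1 u2 f = (\<lambda>k. fconv u1 (partial1 f) k + fconv u2 (partial2 f) k)"

definition gev_norm_sq :: "real \<Rightarrow> real \<Rightarrow> (int \<times> int \<Rightarrow> complex) \<Rightarrow> real" where
  "gev_norm_sq r b f = (2*pi)\<^sup>2 * (\<Sum>\<^sub>\<infinity>k\<in>-{(0,0)}. knorm k powr (2*r) * exp (2*b*knorm k) * (cmod (f k))\<^sup>2)"

definition gev_norm :: "real \<Rightarrow> real \<Rightarrow> (int \<times> int \<Rightarrow> complex) \<Rightarrow> real" where
  "gev_norm r b f = sqrt (gev_norm_sq r b f)"

definition C_W :: "real \<Rightarrow> real" where
  "C_W r = 1/(2*pi) * ((2*r-2)/(2*r-3))"

end

theory Submission
  imports Defs
begin

definition sub :: "int \<times> int \<Rightarrow> int \<times> int \<Rightarrow> int \<times> int" where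
  "sub k j = (fst k - fst j, snd k - snd j)"

lemma knorm_nonneg: "0 \<le> knorm k"
  by (simp add: knorm_def)

lemma knorm_zero [simp]: "knorm (0,0) = 0"
  by (simp add: knorm_def)

lemma int_sq_ge1: "(x::int) \<noteq> 0 \<Longrightarrow> 1 \<le> x\<^sup>2"
proof -
  assume "x \<noteq> 0"
  hence "1 \<le> \<bar>x\<bar>" by simp
  hence "1 * 1 \<le> \<bar>x\<bar> * \<bar>x\<bar>" by (intro mult_mono) auto
  thus ?thesis by (simp add: power2_eq_square)
qed

lemma knorm_ge1: assumes "k \<noteq> (0,0)" shows "1 \<le> knorm k"
proof -
  obtain a b where k: "k = (a,b)" by (cases k)
  have "a \<noteq> 0 \<or> b \<noteq> 0" using assms k by auto
  hence "1 \<le> a\<^sup>2 + b\<^sup>2"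
    using int_sq_ge1[of a] int_sq_ge1[of b] by (auto simp: add_increasing add_increasing2)
  hence "1 \<le> real_of_int (a\<^sup>2 + b\<^sup>2)" by linarith
  hence "1 \<le> (real_of_int a)\<^sup>2 + (real_of_int b)\<^sup>2" by simp
  thus ?thesis by (simp add: knorm_def k)
qed
lemma knorm_pos: assumes "k \<noteq> (0,0)" shows "0 < knorm k"
  using knorm_ge1[OF assms] by linarith

lemma knorm_cmod: "knorm k = cmod (Complex (of_int (fst k)) (of_int (snd k)))"
  by (simp add: knorm_def complex_norm)

lemma knorm_triangle: "knorm k \<le> knorm j + knorm (sub k j)"
proof -
  have "Complex (of_int (fst k)) (of_int (snd k)) =
        Complex (of_int (fst j)) (of_int (snd j)) + Complex (of_int (fst (sub k j))) (of_int (snd (sub k j)))"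
    by (simp add: sub_def complex_eq_iff)
  hence "knorm k = cmod (Complex (of_int (fst j)) (of_int (snd j)) + Complex (of_int (fst (sub k j))) (of_int (snd (sub k j))))"
    unfolding knorm_cmod by simp
  also have "\<dots> \<le> knorm j + knorm (sub k j)" unfolding knorm_cmod by (rule norm_triangle_ineq)
  finally show ?thesis .
qed

lemma abs_fst_le: "\<bar>real_of_int (fst k)\<bar> \<le> knorm k"
  unfolding knorm_def by (rule real_sqrt_ge_abs1)

lemma abs_snd_le: "\<bar>real_of_int (snd k)\<bar> \<le> knorm k"
  unfolding knorm_def by (rule real_sqrt_ge_abs2)

lemma cross_le: "\<bar>real_of_int (snd j) * real_of_int (fst l) - real_of_int (fst j) * real_of_int (snd l)\<bar> \<le> knorm j * knorm l"
proof -
  define x1 where "x1 = real_of_int (fst j)"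
  define x2 where "x2 = real_of_int (snd j)"
  define y1 where "y1 = real_of_int (fst l)"
  define y2 where "y2 = real_of_int (snd l)"
  have "(x2*y1 - x1*y2)\<^sup>2 \<le> (x1\<^sup>2 + x2\<^sup>2) * (y1\<^sup>2+y2\<^sup>2)"
  proof -
    have "(x1\<^sup>2 + x2\<^sup>2) * (y1\<^sup>2+y2\<^sup>2) = (x2*y1 - x1*y2)\<^sup>2 + (x1*y1+x2*y2)\<^sup>2"
      by (simp add: power2_eq_square algebra_simps)
    thus ?thesis by simp
  qed
  hence "sqrt ((x2*y1 - x1*y2)\<^sup>2) \<le> sqrt ((x1\<^sup>2 + x2\<^sup>2) * (y1\<^sup>2+y2\<^sup>2))"
    using real_sqrt_le_mono by blast
  thus ?thesis unfolding knorm_def x1_def[symmetric] x2_def[symmetric] y1_def[symmetric] y2_def[symmetric]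
    by (simp add: real_sqrt_mult)
qed

lemma amgm: fixes x y t :: real assumes "t > 0" shows "x*y \<le> (t*x\<^sup>2 + y\<^sup>2/t)/2"
proof -
  have "0 \<le> (t*x - y)\<^sup>2 / t" using assms by simp
  also have "(t*x - y)\<^sup>2 / t = t*x\<^sup>2 - 2*x*y + y\<^sup>2/t" using assms
    by (simp add: power2_eq_square field_simps)
  finally show ?thesis by simp
qed

lemma sqrt_opt:
  fixes x A B :: real
  assumes "A \<ge> 0" "B \<ge> 0" "\<And>s. s > 0 \<Longrightarrow> x \<le> (s*A + B/s)/2"
  shows "x \<le> sqrt (A*B)"
proof (cases "A > 0 \<and> B > 0")
  case True
  define s where "s = sqrt (B/A)"
  have s: "s > 0" using True by (simp add: s_def)
  have "s*A = sqrt (B/A) * sqrt (A\<^sup>2)" using True unfolding s_def by simp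
  also have "\<dots> = sqrt (B/A * A\<^sup>2)" by (simp only: real_sqrt_mult)
  also have "B/A * A\<^sup>2 = A*B" using True by (simp add: power2_eq_square)
  finally have "s*A = sqrt (A*B)" .
  moreover have "B/s = sqrt (A*B)" using True unfolding s_def
    by (simp add: real_sqrt_divide real_sqrt_mult real_div_sqrt field_simps)
  ultimately show ?thesis using assms(3)[OF s] by simp
next
  case False
  hence z: "A = 0 \<or> B = 0" using assms by auto
  have "x \<le> 0"
  proof (rule ccontr)
    assume "\<not> x \<le> 0"
    hence x: "x > 0" by simp
    show False
    proof (cases "A = 0")
      case True
      define s where "s = (B+1)/x"
      have s: "s > 0" using x assms(1,2) by (simp add: s_def)
      have "x \<le> B/s/2" using assms(3)[OF s] True by simp
      also have "B/s/2 = B*x/(B+1)/2" using x assms(1,2) by (simp add: s_def)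
      also have "\<dots> < x" using x assms(1,2) apply (simp add: field_simps) by (intro add_nonneg_pos) auto
      finally show False by simp
    next
      case False
      hence B: "B = 0" using z by simp
      define s where "s = x/(A+1)"
      have s: "s > 0" using x assms(1,2) by (simp add: s_def)
      have "x \<le> s*A/2" using assms(3)[OF s] B by simp
      also have "s*A/2 = x*A/(A+1)/2" using x assms(1,2) by (simp add: s_def)
      also have "\<dots> < x" using x assms(1,2) apply (simp add: field_simps) by (intro add_nonneg_pos) auto
      finally show False by simp
    qed
  qed
  thus ?thesis using real_sqrt_ge_zero[OF mult_nonneg_nonneg[OF assms(1,2)]] by linarith
qed

lemma key_ineq:
  fixes nj nl nk r :: real
  assumes tri: "nk \<le> nj + nl" and j1: "1 \<le> nj" and l1: "1 \<le> nl" and k0: "0 < nk" and r1: "1 \<le> r"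
  shows "nl * nk powr (2*r) \<le> 2 powr r * (nl powr (r+1/2) * nk powr (r+1/2) + nj powr r * nl powr (1/2) * nk powr (r+1/2))"
proof -
  have split: "nk powr (2*r) = nk powr (r-1/2) * nk powr (r+1/2)"
    by (simp add: powr_add[symmetric])
  have c2: "2 powr (r-1/2) \<le> 2 powr r" by (rule powr_mono) auto
  have pk: "0 \<le> nk powr (r+1/2)" by simp
  show ?thesis
  proof (cases "nj \<le> nl")
    case True
    have "nk \<le> 2*nl" using tri True by linarith
    hence "nk powr (r-1/2) \<le> (2*nl) powr (r-1/2)" using k0 r1 by (intro powr_mono2) auto
    also have "\<dots> = 2 powr (r-1/2) * nl powr (r-1/2)" using l1 by (simp add: powr_mult)
    finally have a: "nk powr (r-1/2) \<le> 2 powr (r-1/2) * nl powr (r-1/2)" .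
    have b: "nl * nl powr (r-1/2) = nl powr (r+1/2)"
    proof -
      have "nl powr (r+1/2) = nl powr (1 + (r-1/2))" by (rule arg_cong[where f="\<lambda>x. nl powr x"]) simp
      also have "\<dots> = nl powr 1 * nl powr (r-1/2)" by (rule powr_add)
      also have "nl powr 1 = nl" using l1 by simp
      finally show ?thesis by simp
    qed
    have "nl * nk powr (2*r) = nl * nk powr (r-1/2) * nk powr (r+1/2)" using split by simp
    also have "\<dots> \<le> nl * (2 powr (r-1/2) * nl powr (r-1/2)) * nk powr (r+1/2)"
      using a l1 pk by (intro mult_right_mono mult_left_mono) auto
    also have "\<dots> = 2 powr (r-1/2) * (nl powr (r+1/2) * nk powr (r+1/2))" using b by (simp add: algebra_simps)
    also have "\<dots> \<le> 2 powr r * (nl powr (r+1/2) * nk powr (r+1/2))"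
      using c2 by (intro mult_right_mono) auto
    also have "\<dots> \<le> 2 powr r * (nl powr (r+1/2) * nk powr (r+1/2) + nj powr r * nl powr (1/2) * nk powr (r+1/2))"
      by (intro mult_left_mono) auto
    finally show ?thesis .
  next
    case False
    have "nk \<le> 2*nj" using tri False by linarith
    hence "nk powr (r-1/2) \<le> (2*nj) powr (r-1/2)" using k0 r1 by (intro powr_mono2) auto
    also have "\<dots> = 2 powr (r-1/2) * nj powr (r-1/2)" using j1 by (simp add: powr_mult)
    finally have a: "nk powr (r-1/2) \<le> 2 powr (r-1/2) * nj powr (r-1/2)" .
    have lsq: "nl = nl powr (1/2) * nl powr (1/2)" using l1 by (simp add: powr_add[symmetric])
    have "nl powr (1/2) \<le> nj powr (1/2)" using False l1 by (intro powr_mono2) auto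
    hence c: "nl \<le> nl powr (1/2) * nj powr (1/2)" using lsq
      by (metis mult_left_mono powr_ge_zero)
    have b: "nj powr (1/2) * nj powr (r-1/2) = nj powr r"
      by (simp add: powr_add[symmetric])
    have "nl * nk powr (2*r) = nl * nk powr (r-1/2) * nk powr (r+1/2)" using split by simp
    also have "\<dots> \<le> (nl powr (1/2) * nj powr (1/2)) * (2 powr (r-1/2) * nj powr (r-1/2)) * nk powr (r+1/2)"
      using a c l1 pk by (intro mult_right_mono mult_mono) auto
    also have "\<dots> = 2 powr (r-1/2) * (nj powr r * nl powr (1/2) * nk powr (r+1/2))"
      using b by (simp add: algebra_simps)
    also have "\<dots> \<le> 2 powr r * (nj powr r * nl powr (1/2) * nk powr (r+1/2))"
      using c2 by (intro mult_right_mono) auto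
    also have "\<dots> \<le> 2 powr r * (nl powr (r+1/2) * nk powr (r+1/2) + nj powr r * nl powr (1/2) * nk powr (r+1/2))"
      by (intro mult_left_mono) auto
    finally show ?thesis .
  qed
qed

lemma infsum_sum_finite:
  fixes f :: "'a \<Rightarrow> 'b \<Rightarrow> real"
  assumes "finite K" "\<And>k. k \<in> K \<Longrightarrow> f k summable_on A"
  shows "(\<Sum>k\<in>K. infsum (f k) A) = infsum (\<lambda>j. \<Sum>k\<in>K. f k j) A"
    and "(\<lambda>j. \<Sum>k\<in>K. f k j) summable_on A"
  using assms
proof (induction K rule: finite_induct)
  case empty
  { case 1 show ?case by simp }
  { case 2 show ?case by simp }
next
  case (insert x F)
  { case 1
    have "(\<Sum>k\<in>insert x F. infsum (f k) A) = infsum (f x) A + (\<Sum>k\<in>F. infsum (f k) A)"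
      using insert by simp
    also have "\<dots> = infsum (f x) A + infsum (\<lambda>j. \<Sum>k\<in>F. f k j) A" using insert 1 by simp
    also have "\<dots> = infsum (\<lambda>j. f x j + (\<Sum>k\<in>F. f k j)) A"
      using insert 1 by (intro infsum_add[symmetric]) auto
    also have "\<dots> = infsum (\<lambda>j. \<Sum>k\<in>insert x F. f k j) A" using insert by simp
    finally show ?case . }
  { case 2
    have "(\<lambda>j. f x j + (\<Sum>k\<in>F. f k j)) summable_on A"
      using insert 2 by (intro summable_on_add) auto
    thus ?case using insert by simp }
qed

definition gfun :: "int \<Rightarrow> real" where
  "gfun a = 1 / ((1 + real_of_int \<bar>a\<bar>) * sqrt (1 + real_of_int \<bar>a\<bar>))"

lemma gfun_nonneg: "0 \<le> gfun a"
  by (simp add: gfun_def)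

lemma powr_m32: assumes "(x::real) > 0" shows "x powr (-3/2) = 1 / (x * sqrt x)"
proof -
  have "x powr (3/2) = x powr (1 + 1/2)" by (rule arg_cong[where f="\<lambda>y. x powr y"]) simp
  also have "\<dots> = x powr 1 * x powr (1/2)" by (rule powr_add)
  also have "x powr 1 = x" using assms by simp
  also have "x powr (1/2) = sqrt x" using assms by (simp add: powr_half_sqrt)
  finally have e: "x powr (3/2) = x * sqrt x" .
  have "x powr (-3/2) = x powr (-(3/2))" by (rule arg_cong[where f="\<lambda>y. x powr y"]) simp
  also have "\<dots> = inverse (x powr (3/2))" by (rule powr_minus)
  also have "\<dots> = 1 / (x * sqrt x)" using e by (simp add: inverse_eq_divide)
  finally show ?thesis .
qed

lemma nat_g_summable: "(\<lambda>n::nat. 1 / ((1 + real n) * sqrt (1 + real n))) summable_on UNIV"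
proof -
  have s1: "summable (\<lambda>n::nat. real n powr (-3/2))" by (simp add: summable_real_powr_iff)
  have "summable (\<lambda>n::nat. real (n+1) powr (-3/2))"
    using summable_ignore_initial_segment[OF s1, of 1] by simp
  hence "summable (\<lambda>n::nat. 1 / ((1 + real n) * sqrt (1 + real n)))"
    by (subst (asm) powr_m32) (auto simp: add.commute)
  thus ?thesis by (subst summable_on_UNIV_nonneg_real_iff) auto
qed

lemma gfun_summable: "gfun summable_on UNIV"
proof -
  have inj1: "inj (int :: nat \<Rightarrow> int)" by (simp add: inj_on_def)
  have inj2: "inj (\<lambda>n::nat. - int n - 1)" by (simp add: inj_on_def)
  have "(gfun \<circ> int) summable_on UNIV"
    using nat_g_summable by (simp add: gfun_def o_def)
  hence A: "gfun summable_on range int" using summable_on_reindex[OF inj1] by blast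
  have "(gfun \<circ> (\<lambda>n::nat. - int n - 1)) summable_on UNIV"
  proof (rule summable_on_comparison_test[OF nat_g_summable])
    fix n :: nat
    show "0 \<le> (gfun \<circ> (\<lambda>n::nat. - int n - 1)) n" by (simp add: gfun_nonneg)
    have e: "\<bar>- int n - 1\<bar> = int n + 1" by simp
    have "(1 + real n) * sqrt (1 + real n) \<le> (2 + real n) * sqrt (2 + real n)"
      by (intro mult_mono) auto
    moreover have "0 < (1 + real n) * sqrt (1 + real n)" by simp
    ultimately show "(gfun \<circ> (\<lambda>n::nat. - int n - 1)) n \<le> 1 / ((1 + real n) * sqrt (1 + real n))"
      unfolding gfun_def o_def e by (simp add: frac_le add.commute)
  qed
  hence B: "gfun summable_on range (\<lambda>n::nat. - int n - 1)" using summable_on_reindex[OF inj2] by blast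
  have U: "UNIV = range int \<union> range (\<lambda>n::nat. - int n - 1)"
  proof -
    { fix x :: int
      have "x \<in> range int \<union> range (\<lambda>n::nat. - int n - 1)"
      proof (cases "x \<ge> 0")
        case True thus ?thesis by (metis UnI1 nonneg_int_cases rangeI)
      next
        case False
        hence "x = - int (nat (-x-1)) - 1" by simp
        thus ?thesis by (metis UnI2 rangeI)
      qed }
    thus ?thesis by auto
  qed
  have D: "range int \<inter> range (\<lambda>n::nat. - int n - 1) = {}" by auto
  show ?thesis using summable_on_Un_disjoint[OF A B D] U by simp
qed

lemma gg_summable: "(\<lambda>x::int\<times>int. gfun (fst x) * gfun (snd x)) summable_on UNIV"
proof (rule nonneg_bdd_above_summable_on)
  show "\<And>x. x \<in> UNIV \<Longrightarrow> 0 \<le> gfun (fst x) * gfun (snd x)" by (simp add: gfun_nonneg)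
  define G where "G = infsum gfun UNIV"
  have fs: "\<And>F. finite F \<Longrightarrow> sum gfun F \<le> G"
    unfolding G_def using gfun_summable gfun_nonneg by (intro finite_sum_le_infsum) auto
  show "bdd_above (sum (\<lambda>x. gfun (fst x) * gfun (snd x)) ` {F. F \<subseteq> UNIV \<and> finite F})"
  proof (rule bdd_aboveI2)
    fix F :: "(int\<times>int) set" assume "F \<in> {F. F \<subseteq> UNIV \<and> finite F}"
    hence F: "finite F" by simp
    have sub: "F \<subseteq> fst ` F \<times> snd ` F" by force
    have "(\<Sum>x\<in>F. gfun (fst x) * gfun (snd x)) \<le> (\<Sum>x\<in>fst ` F \<times> snd ` F. gfun (fst x) * gfun (snd x))"
      using F sub by (intro sum_mono2) (auto simp: gfun_nonneg)
    also have "\<dots> = (\<Sum>a\<in>fst ` F. gfun a) * (\<Sum>b\<in>snd ` F. gfun b)"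
      by (simp add: sum_product sum.cartesian_product case_prod_beta)
    also have "\<dots> \<le> G * G"
      using fs F fs[of "{}"] by (intro mult_mono) (auto simp: sum_nonneg gfun_nonneg)
    finally show "(\<Sum>x\<in>F. gfun (fst x) * gfun (snd x)) \<le> G * G" .
  qed
qed

lemma Z3_summable: "(\<lambda>k. 1 / knorm k ^ 3) summable_on UNIV"
proof (rule summable_on_comparison_test)
  show "(\<lambda>x::int\<times>int. 8 * (gfun (fst x) * gfun (snd x))) summable_on UNIV"
    using gg_summable by (rule summable_on_cmult_right)
  fix k :: "int \<times> int"
  show "0 \<le> 1 / knorm k ^ 3" by (simp add: knorm_nonneg)
  show "1 / knorm k ^ 3 \<le> 8 * (gfun (fst k) * gfun (snd k))"
  proof (cases "k = (0,0)")
    case True thus ?thesis by (simp add: gfun_nonneg)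
  next
    case False
    define n where "n = knorm k"
    have n1: "1 \<le> n" using knorm_ge1[OF False] by (simp add: n_def)
    define p where "p = 1 + real_of_int \<bar>fst k\<bar>"
    define q where "q = 1 + real_of_int \<bar>snd k\<bar>"
    have p: "1 \<le> p" "p \<le> 2*n" using abs_fst_le[of k] n1 by (auto simp: p_def n_def)
    have q: "1 \<le> q" "q \<le> 2*n" using abs_snd_le[of k] n1 by (auto simp: q_def n_def)
    have pq: "p*q \<le> 4*n^2" using p q mult_mono[of p "2*n" q "2*n"] by (simp add: power2_eq_square)
    have spq: "sqrt (p*q) \<le> 2*n"
    proof -
      have "sqrt (p*q) \<le> sqrt (4*n^2)" using pq by (rule real_sqrt_le_mono)
      also have "sqrt (4*n^2) = 2*n" using n1 by (simp add: real_sqrt_mult)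
      finally show ?thesis .
    qed
    have "(p*q) * sqrt (p*q) \<le> (4*n^2) * (2*n)" using mult_mono[OF pq spq] p q by simp
    hence le: "(p*q) * sqrt (p*q) \<le> 8 * n^3" by (simp add: power2_eq_square power3_eq_cube)
    have pos: "0 < (p*q) * sqrt (p*q)" using p q by simp
    have "gfun (fst k) * gfun (snd k) = 1 / ((p*q) * sqrt (p*q))"
      unfolding gfun_def p_def[symmetric] q_def[symmetric] by (simp add: real_sqrt_mult)
    moreover have "1 / n^3 \<le> 8 * (1 / ((p*q) * sqrt (p*q)))"
    proof -
      have n3: "0 < n^3" using n1 by simp
      have "1 / n^3 = 8 / (8 * n^3)" using n3 by simp
      also have "\<dots> \<le> 8 / ((p*q) * sqrt (p*q))"
        using le pos n3 by (intro divide_left_mono) auto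
      finally show ?thesis by simp
    qed
    ultimately show ?thesis by (simp add: n_def)
  qed
qed

lemma sub_inj: "inj_on (\<lambda>k. sub k j) K"
  by (auto simp: inj_on_def sub_def prod_eq_iff)

lemma trilin:
  fixes P Q R :: "int \<times> int \<Rightarrow> real"
  assumes F: "finite F" and P: "\<And>x. 0 \<le> P x" and Q: "\<And>x. 0 \<le> Q x" and R: "\<And>x. 0 \<le> R x"
    and sQ: "(\<lambda>x. (Q x)\<^sup>2) summable_on UNIV" and sR: "(\<lambda>x. (R x)\<^sup>2) summable_on UNIV" and t: "t > 0"
  shows "(\<Sum>(j,k)\<in>F. P j * Q (sub k j) * R k)
     \<le> (\<Sum>j\<in>fst`F. P j) * ((t * infsum (\<lambda>x. (Q x)\<^sup>2) UNIV + infsum (\<lambda>x. (R x)\<^sup>2) UNIV / t)/2)"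
proof -
  define J where "J = fst ` F"
  define K where "K = snd ` F"
  define QQ where "QQ = infsum (\<lambda>x. (Q x)\<^sup>2) UNIV"
  define RR where "RR = infsum (\<lambda>x. (R x)\<^sup>2) UNIV"
  define B where "B = (t * QQ + RR / t)/2"
  have fJ: "finite J" and fK: "finite K" using F by (auto simp: J_def K_def)
  have inner: "(\<Sum>k\<in>K. Q (sub k j) * R k) \<le> B" for j
  proof -
    have "(\<Sum>k\<in>K. Q (sub k j) * R k) \<le> (\<Sum>k\<in>K. (t * (Q (sub k j))\<^sup>2 + (R k)\<^sup>2 / t)/2)"
      using t by (intro sum_mono amgm)
    also have "\<dots> = (t * (\<Sum>k\<in>K. (Q (sub k j))\<^sup>2) + (\<Sum>k\<in>K. (R k)\<^sup>2) / t)/2"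
      by (simp only: sum.distrib flip: sum_divide_distrib sum_distrib_left)
    also have "\<dots> \<le> B"
    proof -
      have "(\<Sum>k\<in>K. (Q (sub k j))\<^sup>2) = (\<Sum>m\<in>(\<lambda>k. sub k j) ` K. (Q m)\<^sup>2)"
        by (simp add: sum.reindex[OF sub_inj])
      also have "\<dots> \<le> QQ" unfolding QQ_def using fK sQ
        by (intro finite_sum_le_infsum) auto
      finally have a: "(\<Sum>k\<in>K. (Q (sub k j))\<^sup>2) \<le> QQ" .
      have b: "(\<Sum>k\<in>K. (R k)\<^sup>2) \<le> RR" unfolding RR_def using fK sR
        by (intro finite_sum_le_infsum) auto
      have "t * (\<Sum>k\<in>K. (Q (sub k j))\<^sup>2) \<le> t * QQ" using a t by simp
      moreover have "(\<Sum>k\<in>K. (R k)\<^sup>2) / t \<le> RR / t" using b t by (simp add: divide_right_mono)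
      ultimately show ?thesis unfolding B_def using a b t by (intro divide_right_mono add_mono mult_left_mono) auto
    qed
    finally show ?thesis .
  qed
  have sub: "F \<subseteq> J \<times> K" unfolding J_def K_def by force
  have "(\<Sum>(j,k)\<in>F. P j * Q (sub k j) * R k) \<le> (\<Sum>(j,k)\<in>J \<times> K. P j * Q (sub k j) * R k)"
    using fJ fK sub by (intro sum_mono2) (auto intro!: mult_nonneg_nonneg simp: P Q R)
  also have "\<dots> = (\<Sum>j\<in>J. P j * (\<Sum>k\<in>K. Q (sub k j) * R k))"
    by (simp add: sum.cartesian_product[symmetric] sum_distrib_left mult.assoc)
  also have "\<dots> \<le> (\<Sum>j\<in>J. P j * B)"
    using inner P by (intro sum_mono mult_left_mono) auto
  also have "\<dots> = (\<Sum>j\<in>J. P j) * B" by (simp add: sum_distrib_right)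
  finally show ?thesis unfolding J_def B_def QQ_def RR_def .
qed

lemma knorm_powr_inv_bound:
  assumes "k \<noteq> (0,0)" "r \<ge> 3/2"
  shows "(knorm k powr (-r))\<^sup>2 \<le> 1 / knorm k ^ 3"
proof -
  define n where "n = knorm k"
  have n1: "1 \<le> n" using knorm_ge1[OF assms(1)] by (simp add: n_def)
  have "(n powr (-r))\<^sup>2 = n powr (-r) * n powr (-r)" by (simp add: power2_eq_square)
  also have "\<dots> = n powr (-r + -r)" by (rule powr_add[symmetric])
  also have "\<dots> \<le> n powr (-3)" using n1 assms(2) by (intro powr_mono) auto
  also have "n powr (-3) = inverse (n powr 3)" by (rule powr_minus)
  also have "\<dots> = 1 / n^3" using n1 by (simp add: inverse_eq_divide)
  finally show ?thesis by (simp add: n_def)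
qed

lemma lemB:
  fixes P :: "int \<times> int \<Rightarrow> real"
  assumes L: "finite L" and P: "\<And>x. 0 \<le> P x" and P0: "P (0,0) = 0"
    and sW: "(\<lambda>x. (knorm x powr r * P x)\<^sup>2) summable_on UNIV" and r: "r \<ge> 3/2" and s: "s > 0"
  shows "(\<Sum>l\<in>L. P l) \<le> (s * infsum (\<lambda>k. 1 / knorm k ^ 3) UNIV + infsum (\<lambda>x. (knorm x powr r * P x)\<^sup>2) UNIV / s)/2"
proof -
  have pw: "P l \<le> (s * (1 / knorm l ^ 3) + (knorm l powr r * P l)\<^sup>2 / s)/2" for l
  proof (cases "l = (0,0)")
    case True thus ?thesis using P0 by simp
  next
    case False
    have n0: "0 < knorm l" using knorm_pos[OF False] .
    have "P l = knorm l powr (-r) * (knorm l powr r * P l)"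
    proof -
      have "knorm l powr (-r) * knorm l powr r = knorm l powr (-r + r)" by (rule powr_add[symmetric])
      also have "\<dots> = 1" using n0 by simp
      finally show ?thesis by (metis mult.assoc mult_1)
    qed
    also have "\<dots> \<le> (s * (knorm l powr (-r))\<^sup>2 + (knorm l powr r * P l)\<^sup>2 / s)/2"
      using s by (rule amgm)
    also have "\<dots> \<le> (s * (1 / knorm l ^ 3) + (knorm l powr r * P l)\<^sup>2 / s)/2"
      using s by (intro divide_right_mono add_mono mult_left_mono knorm_powr_inv_bound[OF False r]) auto
    finally show ?thesis .
  qed
  have "(\<Sum>l\<in>L. P l) \<le> (\<Sum>l\<in>L. (s * (1 / knorm l ^ 3) + (knorm l powr r * P l)\<^sup>2 / s)/2)"
    using pw by (rule sum_mono)
  also have "\<dots> = (s * (\<Sum>l\<in>L. 1 / knorm l ^ 3) + (\<Sum>l\<in>L. (knorm l powr r * P l)\<^sup>2) / s)/2"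
    by (simp only: sum.distrib flip: sum_divide_distrib sum_distrib_left)
  also have "\<dots> \<le> (s * infsum (\<lambda>k. 1 / knorm k ^ 3) UNIV + infsum (\<lambda>x. (knorm x powr r * P x)\<^sup>2) UNIV / s)/2"
  proof -
    have a: "(\<Sum>l\<in>L. 1 / knorm l ^ 3) \<le> infsum (\<lambda>k. 1 / knorm k ^ 3) UNIV"
      using L Z3_summable by (intro finite_sum_le_infsum) (auto simp: knorm_nonneg)
    have b: "(\<Sum>l\<in>L. (knorm l powr r * P l)\<^sup>2) \<le> infsum (\<lambda>x. (knorm x powr r * P x)\<^sup>2) UNIV"
      using L sW by (intro finite_sum_le_infsum) auto
    show ?thesis using a b s by (intro divide_right_mono add_mono mult_left_mono) auto
  qed
  finally show ?thesis .
qed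

definition Z3 :: real where "Z3 = infsum (\<lambda>k. 1 / knorm k ^ 3) UNIV"

lemma Z3_nonneg: "0 \<le> Z3"
  unfolding Z3_def by (intro infsum_nonneg) (simp add: knorm_nonneg)

lemma T1gen:
  fixes P R :: "int \<times> int \<Rightarrow> real"
  assumes F: "finite F" and P: "\<And>x. 0 \<le> P x" and R: "\<And>x. 0 \<le> R x" and P0: "P (0,0) = 0"
    and sW: "(\<lambda>x. (knorm x powr r * P x)\<^sup>2) summable_on UNIV"
    and sR: "(\<lambda>x. (R x)\<^sup>2) summable_on UNIV" and r: "r \<ge> 3/2"
  shows "(\<Sum>(j,k)\<in>F. P j * R (sub k j) * R k)
    \<le> sqrt Z3 * sqrt (infsum (\<lambda>x. (knorm x powr r * P x)\<^sup>2) UNIV) * infsum (\<lambda>x. (R x)\<^sup>2) UNIV"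
proof -
  define W where "W = infsum (\<lambda>x. (knorm x powr r * P x)\<^sup>2) UNIV"
  define N where "N = infsum (\<lambda>x. (R x)\<^sup>2) UNIV"
  have W0: "0 \<le> W" unfolding W_def by (intro infsum_nonneg) auto
  have N0: "0 \<le> N" unfolding N_def by (intro infsum_nonneg) auto
  have T: "(\<Sum>(j,k)\<in>F. P j * R (sub k j) * R k) \<le> (\<Sum>j\<in>fst`F. P j) * N"
    using trilin[OF F P R R sR sR, of 1] by (simp add: N_def)
  have "(\<Sum>(j,k)\<in>F. P j * R (sub k j) * R k) \<le> sqrt ((Z3 * N) * (W * N))"
  proof (rule sqrt_opt)
    show "0 \<le> Z3 * N" "0 \<le> W * N" using Z3_nonneg N0 W0 by auto
    fix s :: real assume s: "s > 0"
    have "(\<Sum>j\<in>fst`F. P j) \<le> (s * Z3 + W / s)/2"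
      unfolding Z3_def W_def using F P P0 sW r s by (intro lemB) auto
    hence "(\<Sum>j\<in>fst`F. P j) * N \<le> ((s * Z3 + W / s)/2) * N" using N0 by (rule mult_right_mono)
    also have "\<dots> = (s * (Z3 * N) + (W * N) / s)/2" by (simp add: algebra_simps)
    finally show "(\<Sum>(j,k)\<in>F. P j * R (sub k j) * R k) \<le> (s * (Z3 * N) + (W * N) / s)/2"
      using T by linarith
  qed
  also have "sqrt ((Z3 * N) * (W * N)) = sqrt Z3 * sqrt W * N"
    using N0 by (simp add: real_sqrt_mult power2_eq_square[symmetric])
  finally show ?thesis unfolding W_def N_def .
qed

lemma sub_sub [simp]: "sub k (sub k j) = j"
  by (simp add: sub_def)

lemma T2gen:
  fixes Q A B :: "int \<times> int \<Rightarrow> real"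
  assumes F: "finite F" and Q: "\<And>x. 0 \<le> Q x" and A: "\<And>x. 0 \<le> A x" and B: "\<And>x. 0 \<le> B x"
    and Q0: "Q (0,0) = 0"
    and sW: "(\<lambda>x. (knorm x powr r * Q x)\<^sup>2) summable_on UNIV"
    and sA: "(\<lambda>x. (A x)\<^sup>2) summable_on UNIV" and sB: "(\<lambda>x. (B x)\<^sup>2) summable_on UNIV"
    and r: "r \<ge> 3/2"
  shows "(\<Sum>(j,k)\<in>F. A j * Q (sub k j) * B k)
    \<le> sqrt (Z3 * infsum (\<lambda>x. (knorm x powr r * Q x)\<^sup>2) UNIV) * sqrt (infsum (\<lambda>x. (A x)\<^sup>2) UNIV * infsum (\<lambda>x. (B x)\<^sup>2) UNIV)"
proof -
  define W where "W = infsum (\<lambda>x. (knorm x powr r * Q x)\<^sup>2) UNIV"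
  define NA where "NA = infsum (\<lambda>x. (A x)\<^sup>2) UNIV"
  define NB where "NB = infsum (\<lambda>x. (B x)\<^sup>2) UNIV"
  have W0: "0 \<le> W" unfolding W_def by (intro infsum_nonneg) auto
  have NA0: "0 \<le> NA" unfolding NA_def by (intro infsum_nonneg) auto
  have NB0: "0 \<le> NB" unfolding NB_def by (intro infsum_nonneg) auto
  define phi where "phi = (\<lambda>(j,k). (sub k j, k))"
  have inj: "inj_on phi F" unfolding phi_def inj_on_def
    by (auto simp: sub_def prod_eq_iff)
  have re: "(\<Sum>(j,k)\<in>F. A j * Q (sub k j) * B k) = (\<Sum>(l,k)\<in>phi ` F. Q l * A (sub k l) * B k)"
    by (subst sum.reindex[OF inj]) (auto simp: phi_def case_prod_beta intro!: sum.cong)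
  define S where "S = (\<Sum>(j,k)\<in>F. A j * Q (sub k j) * B k)"
  define c where "c = sqrt (Z3 * W)"
  have c0: "0 \<le> c" unfolding c_def using Z3_nonneg W0 by simp
  have step: "S \<le> c * ((t * NA + NB / t)/2)" if t: "t > 0" for t
  proof -
    define g where "g = (t * NA + NB / t)/2"
    have g0: "0 \<le> g" unfolding g_def using t NA0 NB0 by simp
    have T: "S \<le> (\<Sum>l\<in>fst`(phi`F). Q l) * g"
      unfolding S_def re g_def NA_def NB_def using F by (intro trilin Q A B sA sB t) auto
    have "S \<le> sqrt ((Z3 * g) * (W * g))"
    proof (rule sqrt_opt)
      show "0 \<le> Z3 * g" "0 \<le> W * g" using Z3_nonneg g0 W0 by auto
      fix s :: real assume s: "s > 0"
      have "(\<Sum>l\<in>fst`(phi`F). Q l) \<le> (s * Z3 + W / s)/2"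
        unfolding Z3_def W_def using F Q Q0 sW r s by (intro lemB) auto
      hence "(\<Sum>l\<in>fst`(phi`F). Q l) * g \<le> ((s * Z3 + W / s)/2) * g" using g0 by (rule mult_right_mono)
      also have "\<dots> = (s * (Z3 * g) + (W * g) / s)/2" by (simp add: algebra_simps)
      finally show "S \<le> (s * (Z3 * g) + (W * g) / s)/2" using T by linarith
    qed
    also have "sqrt ((Z3 * g) * (W * g)) = c * g"
      unfolding c_def using g0 by (simp add: real_sqrt_mult power2_eq_square[symmetric] algebra_simps)
    finally show ?thesis unfolding g_def .
  qed
  have "S \<le> sqrt ((c * NA) * (c * NB))"
  proof (rule sqrt_opt)
    show "0 \<le> c * NA" "0 \<le> c * NB" using c0 NA0 NB0 by auto
    fix t :: real assume t: "t > 0"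
    have "S \<le> c * ((t * NA + NB / t)/2)" using step[OF t] .
    also have "\<dots> = (t * (c * NA) + (c * NB) / t)/2" by (simp add: algebra_simps)
    finally show "S \<le> (t * (c * NA) + (c * NB) / t)/2" .
  qed
  also have "sqrt ((c * NA) * (c * NB)) = c * sqrt (NA * NB)"
    using c0 by (simp add: real_sqrt_mult power2_eq_square[symmetric] algebra_simps)
  finally show ?thesis unfolding S_def c_def W_def NA_def NB_def .
qed

lemma riesz_term:
  "(- riesz2 eta j) * partial1 eta l + riesz1 eta j * partial2 eta l =
   (if j = (0,0) then 0 else complex_of_real ((real_of_int (snd j) * real_of_int (fst l) - real_of_int (fst j) * real_of_int (snd l)) / knorm j) * eta j * eta l)"
proof (cases "j = (0,0)")
  case True thus ?thesis by (simp add: riesz1_def riesz2_def)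
next
  case False
  have "(- riesz2 eta j) * partial1 eta l + riesz1 eta j * partial2 eta l =
     - (\<i> * \<i>) * ((of_int (snd j) * of_int (fst l) - of_int (fst j) * of_int (snd l)) / complex_of_real (knorm j)) * eta j * eta l"
    using False by (simp add: riesz1_def riesz2_def partial1_def partial2_def algebra_simps diff_divide_distrib)
  also have "\<dots> = complex_of_real ((real_of_int (snd j) * real_of_int (fst l) - real_of_int (fst j) * real_of_int (snd l)) / knorm j) * eta j * eta l"
    by simp
  finally show ?thesis using False by simp
qed

lemma norm_T_le:
  "cmod ((- riesz2 eta j) * partial1 eta l + riesz1 eta j * partial2 eta l) \<le> cmod (eta j) * knorm l * cmod (eta l)"
proof (cases "j = (0,0)")
  case True thus ?thesis by (simp add: riesz1_def riesz2_def knorm_nonneg)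
next
  case False
  define c where "c = real_of_int (snd j) * real_of_int (fst l) - real_of_int (fst j) * real_of_int (snd l)"
  have nj: "0 < knorm j" using knorm_pos[OF False] .
  have e: "(- riesz2 eta j) * partial1 eta l + riesz1 eta j * partial2 eta l = complex_of_real (c / knorm j) * eta j * eta l"
    using False unfolding riesz_term c_def by simp
  have "cmod ((- riesz2 eta j) * partial1 eta l + riesz1 eta j * partial2 eta l) = \<bar>c\<bar> / knorm j * cmod (eta j) * cmod (eta l)"
    unfolding e using nj by (simp add: norm_mult norm_divide)
  also have "\<dots> \<le> knorm l * cmod (eta j) * cmod (eta l)"
  proof -
    have "\<bar>c\<bar> \<le> knorm j * knorm l" unfolding c_def by (rule cross_le)
    hence "\<bar>c\<bar> / knorm j \<le> knorm l" using nj by (simp add: divide_le_eq mult.commute)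
    thus ?thesis by (intro mult_right_mono) auto
  qed
  finally show ?thesis by (simp add: algebra_simps)
qed

lemma norm_riesz1_le: "cmod (riesz1 eta j) \<le> cmod (eta j)"
proof (cases "j = (0,0)")
  case True thus ?thesis by (simp add: riesz1_def)
next
  case False
  have nj: "0 < knorm j" using knorm_pos[OF False] .
  have "\<bar>real_of_int (fst j)\<bar> / knorm j \<le> 1" using abs_fst_le[of j] nj by simp
  hence "\<bar>real_of_int (fst j)\<bar> / knorm j * cmod (eta j) \<le> 1 * cmod (eta j)" by (intro mult_right_mono) auto
  thus ?thesis using False nj by (simp add: riesz1_def norm_mult norm_divide)
qed

lemma norm_riesz2_le: "cmod (riesz2 eta j) \<le> cmod (eta j)"
proof (cases "j = (0,0)")
  case True thus ?thesis by (simp add: riesz2_def)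
next
  case False
  have nj: "0 < knorm j" using knorm_pos[OF False] .
  have "\<bar>real_of_int (snd j)\<bar> / knorm j \<le> 1" using abs_snd_le[of j] nj by simp
  hence "\<bar>real_of_int (snd j)\<bar> / knorm j * cmod (eta j) \<le> 1 * cmod (eta j)" by (intro mult_right_mono) auto
  thus ?thesis using False nj by (simp add: riesz2_def norm_mult norm_divide)
qed

lemma norm_partial1_le: "cmod (partial1 eta l) \<le> knorm l * cmod (eta l)"
  unfolding partial1_def norm_mult using abs_fst_le[of l] by (intro mult_right_mono) auto

lemma norm_partial2_le: "cmod (partial2 eta l) \<le> knorm l * cmod (eta l)"
  unfolding partial2_def norm_mult using abs_snd_le[of l] by (intro mult_right_mono) auto

lemma norm_term1_le: "cmod ((- riesz2 eta j) * partial1 eta l) \<le> cmod (eta j) * knorm l * cmod (eta l)"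
  unfolding norm_mult norm_minus_cancel mult.assoc
  using norm_riesz2_le norm_partial1_le by (intro mult_mono) (auto simp: knorm_nonneg)

lemma norm_term2_le: "cmod (riesz1 eta j * partial2 eta l) \<le> cmod (eta j) * knorm l * cmod (eta l)"
  unfolding norm_mult mult.assoc
  using norm_riesz1_le norm_partial2_le by (intro mult_mono) (auto simp: knorm_nonneg)

definition A0f :: "real \<Rightarrow> real \<Rightarrow> (int \<times> int \<Rightarrow> complex) \<Rightarrow> int \<times> int \<Rightarrow> real" where
  "A0f r b eta k = knorm k powr r * exp (b * knorm k) * cmod (eta k)"
definition A1f :: "real \<Rightarrow> real \<Rightarrow> (int \<times> int \<Rightarrow> complex) \<Rightarrow> int \<times> int \<Rightarrow> real" where
  "A1f r b eta k = knorm k powr (r + 1/2) * exp (b * knorm k) * cmod (eta k)"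
definition P1f :: "real \<Rightarrow> (int \<times> int \<Rightarrow> complex) \<Rightarrow> int \<times> int \<Rightarrow> real" where
  "P1f b eta k = exp (b * knorm k) * cmod (eta k)"
definition Q2f :: "real \<Rightarrow> (int \<times> int \<Rightarrow> complex) \<Rightarrow> int \<times> int \<Rightarrow> real" where
  "Q2f b eta k = knorm k powr (1/2) * exp (b * knorm k) * cmod (eta k)"
definition h0 :: "(int \<times> int \<Rightarrow> complex) \<Rightarrow> int \<times> int \<Rightarrow> int \<times> int \<Rightarrow> real" where
  "h0 eta k j = cmod (eta j) * knorm (sub k j) * cmod (eta (sub k j))"
definition gG :: "real \<Rightarrow> real \<Rightarrow> (int \<times> int \<Rightarrow> complex) \<Rightarrow> int \<times> int \<Rightarrow> real" where
  "gG r b eta k = knorm k powr (2*r) * exp (2*b*knorm k) * cmod (eta k)"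

lemma powr_sq: "((x::real) powr c)\<^sup>2 = x powr (2*c)"
proof -
  have "(x powr c)\<^sup>2 = x powr c * x powr c" by (simp add: power2_eq_square)
  also have "\<dots> = x powr (c + c)" by (rule powr_add[symmetric])
  finally show ?thesis by simp
qed

lemma exp_sq: "exp (2*(y::real)) = (exp y)\<^sup>2"
proof -
  have "(exp y)\<^sup>2 = exp y * exp y" by (simp add: power2_eq_square)
  also have "\<dots> = exp (y + y)" by (rule exp_add[symmetric])
  finally show ?thesis by simp
qed

lemma hyp_eq: "knorm k powr (2*r) * exp (2*b*knorm k) * (cmod (Lambda_pow (1/2) eta k))\<^sup>2 = (A1f r b eta k)\<^sup>2"
proof -
  define n where "n = knorm k"
  have n0: "0 \<le> n" by (simp add: n_def knorm_nonneg)
  have c: "cmod (Lambda_pow (1/2) eta k) = n powr (1/2) * cmod (eta k)"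
    by (simp add: Lambda_pow_def norm_mult n_def)
  have s1: "(n powr (1/2))\<^sup>2 = n" using n0 by (simp add: powr_sq)
  have s2: "(n powr (r+1/2))\<^sup>2 = n powr (2*r) * n"
  proof -
    have "(n powr (r+1/2))\<^sup>2 = n powr (2*r + 1)" by (simp add: powr_sq algebra_simps)
    also have "\<dots> = n powr (2*r) * n powr 1" by (rule powr_add)
    also have "n powr 1 = n" using n0 by simp
    finally show ?thesis .
  qed
  have s3: "exp (2*b*n) = (exp (b*n))\<^sup>2" using exp_sq[of "b*n"] by (simp add: mult.assoc)
  show ?thesis unfolding A1f_def n_def[symmetric] c s3
    by (simp add: power_mult_distrib s1 s2 algebra_simps)
qed

lemma gev_eq: "knorm k powr (2*r) * exp (2*b*knorm k) * (cmod (eta k))\<^sup>2 = (A0f r b eta k)\<^sup>2"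
proof -
  have s3: "exp (2*b*knorm k) = (exp (b*knorm k))\<^sup>2" using exp_sq[of "b*knorm k"] by (simp add: mult.assoc)
  show ?thesis unfolding A0f_def s3 by (simp add: power_mult_distrib powr_sq algebra_simps)
qed

lemma A0_le_A1: "A0f r b eta k \<le> A1f r b eta k"
proof (cases "k = (0,0)")
  case True thus ?thesis by (simp add: A0f_def A1f_def)
next
  case False
  have "knorm k powr r \<le> knorm k powr (r + 1/2)" using knorm_ge1[OF False] by (intro powr_mono) auto
  thus ?thesis unfolding A0f_def A1f_def by (intro mult_right_mono) auto
qed

lemma A0_nonneg: "0 \<le> A0f r b eta k" by (simp add: A0f_def)
lemma A1_nonneg: "0 \<le> A1f r b eta k" by (simp add: A1f_def)
lemma P1_nonneg: "0 \<le> P1f b eta k" by (simp add: P1f_def)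
lemma Q2_nonneg: "0 \<le> Q2f b eta k" by (simp add: Q2f_def)
lemma h0_nonneg: "0 \<le> h0 eta k j" by (simp add: h0_def knorm_nonneg)

lemma a_le_A0: assumes "eta (0,0) = 0" "b \<ge> 0" "r \<ge> 0" shows "cmod (eta k) \<le> A0f r b eta k"
proof (cases "k = (0,0)")
  case True thus ?thesis using assms by (simp add: A0f_def)
next
  case False
  have n1: "1 \<le> knorm k" using knorm_ge1[OF False] .
  have "1 \<le> knorm k powr r" using n1 assms by (simp add: ge_one_powr_ge_zero)
  moreover have "1 \<le> exp (b * knorm k)" using n1 assms by simp
  ultimately have "1 * 1 \<le> knorm k powr r * exp (b * knorm k)" by (intro mult_mono) auto
  hence "1 * cmod (eta k) \<le> knorm k powr r * exp (b * knorm k) * cmod (eta k)" by (intro mult_right_mono) auto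
  thus ?thesis by (simp add: A0f_def)
qed

lemma na_le_A1: assumes "b \<ge> 0" "r \<ge> 1/2" shows "knorm k * cmod (eta k) \<le> A1f r b eta k"
proof (cases "k = (0,0)")
  case True thus ?thesis by (simp add: A1f_def)
next
  case False
  have n1: "1 \<le> knorm k" using knorm_ge1[OF False] .
  have "knorm k = knorm k powr 1" using n1 by simp
  also have "\<dots> \<le> knorm k powr (r + 1/2)" using n1 assms by (intro powr_mono) auto
  finally have a: "knorm k \<le> knorm k powr (r + 1/2)" .
  have "1 \<le> exp (b * knorm k)" using n1 assms by simp
  hence "knorm k * 1 \<le> knorm k powr (r + 1/2) * exp (b * knorm k)" using a n1 by (intro mult_mono) auto
  hence "knorm k * 1 * cmod (eta k) \<le> knorm k powr (r + 1/2) * exp (b * knorm k) * cmod (eta k)" by (intro mult_right_mono) auto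
  thus ?thesis by (simp add: A1f_def)
qed

lemma bij_sub: "bij_betw (\<lambda>j. sub k j) UNIV UNIV"
  by (rule bij_betwI[where g="\<lambda>j. sub k j"]) auto

lemma h0_summable:
  assumes e0: "eta (0,0) = 0" and b: "b \<ge> 0" and r: "r \<ge> 1/2"
    and s0: "(\<lambda>x. (A0f r b eta x)\<^sup>2) summable_on UNIV" and s1: "(\<lambda>x. (A1f r b eta x)\<^sup>2) summable_on UNIV"
  shows "h0 eta k summable_on UNIV"
proof (rule summable_on_comparison_test)
  have s1': "(\<lambda>j. (A1f r b eta (sub k j))\<^sup>2) summable_on UNIV"
    using summable_on_reindex_bij_betw[OF bij_sub[of k], of "\<lambda>x. (A1f r b eta x)\<^sup>2"] s1 by simp
  show "(\<lambda>j. (1/2) * ((A0f r b eta j)\<^sup>2 + (A1f r b eta (sub k j))\<^sup>2)) summable_on UNIV"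
    by (intro summable_on_cmult_right summable_on_add s0 s1')
  fix j
  show "0 \<le> h0 eta k j" by (rule h0_nonneg)
  have "h0 eta k j = cmod (eta j) * (knorm (sub k j) * cmod (eta (sub k j)))" by (simp add: h0_def mult.assoc)
  also have "\<dots> \<le> (1 * (cmod (eta j))\<^sup>2 + (knorm (sub k j) * cmod (eta (sub k j)))\<^sup>2 / 1) / 2"
    by (rule amgm) simp
  also have "\<dots> \<le> (1/2) * ((A0f r b eta j)\<^sup>2 + (A1f r b eta (sub k j))\<^sup>2)"
  proof -
    have "(cmod (eta j))\<^sup>2 \<le> (A0f r b eta j)\<^sup>2"
      using a_le_A0[of eta b r j] e0 b r by (intro power_mono) auto
    moreover have "(knorm (sub k j) * cmod (eta (sub k j)))\<^sup>2 \<le> (A1f r b eta (sub k j))\<^sup>2"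
      using na_le_A1[of b r "sub k j" eta] b r by (intro power_mono) (auto simp: knorm_nonneg)
    ultimately show ?thesis by simp
  qed
  finally show "h0 eta k j \<le> (1/2) * ((A0f r b eta j)\<^sup>2 + (A1f r b eta (sub k j))\<^sup>2)" .
qed

lemma X_bound:
  assumes hs: "h0 eta k summable_on UNIV"
  shows "cmod (advect (\<lambda>k. - riesz2 eta k) (riesz1 eta) eta k) \<le> infsum (h0 eta k) UNIV"
proof -
  define t1 where "t1 = (\<lambda>j. - riesz2 eta j * partial1 eta (sub k j))"
  define t2 where "t2 = (\<lambda>j. riesz1 eta j * partial2 eta (sub k j))"
  have adv: "advect (\<lambda>k. - riesz2 eta k) (riesz1 eta) eta k = infsum t1 UNIV + infsum t2 UNIV"
    unfolding advect_def fconv_def t1_def t2_def sub_def by simp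
  have hn: "(\<lambda>j. norm (h0 eta k j)) summable_on UNIV"
    using hs by (simp add: h0_nonneg)
  have a1: "(\<lambda>j. norm (t1 j)) summable_on UNIV"
    by (rule Infinite_Sum.abs_summable_on_comparison_test[OF hn]) (simp add: t1_def h0_def norm_term1_le[simplified] h0_nonneg[unfolded h0_def])
  have a2: "(\<lambda>j. norm (t2 j)) summable_on UNIV"
    by (rule Infinite_Sum.abs_summable_on_comparison_test[OF hn]) (simp add: t2_def h0_def norm_term2_le h0_nonneg[unfolded h0_def])
  have s1: "t1 summable_on UNIV" using a1 summable_on_iff_abs_summable_on_complex by blast
  have s2: "t2 summable_on UNIV" using a2 summable_on_iff_abs_summable_on_complex by blast
  have s12: "(\<lambda>j. t1 j + t2 j) summable_on UNIV" using s1 s2 by (rule summable_on_add)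
  have a12: "(\<lambda>j. norm (t1 j + t2 j)) summable_on UNIV" using summable_on_iff_abs_summable_on_complex[THEN iffD1, OF s12] .
  have "cmod (advect (\<lambda>k. - riesz2 eta k) (riesz1 eta) eta k) = cmod (infsum (\<lambda>j. t1 j + t2 j) UNIV)"
    unfolding adv using infsum_add[OF s1 s2] by simp
  also have "\<dots> \<le> infsum (\<lambda>j. cmod (t1 j + t2 j)) UNIV" using a12 by (rule norm_infsum_bound)
  also have "\<dots> \<le> infsum (h0 eta k) UNIV"
  proof (rule infsum_mono[OF a12 hs])
    fix j
    show "cmod (t1 j + t2 j) \<le> h0 eta k j"
      unfolding t1_def t2_def h0_def by (rule norm_T_le)
  qed
  finally show ?thesis .
qed

lemma normG: "cmod (Lambda_pow (2*r) (exp_Lambda (2*b) eta) k) = gG r b eta k"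
  by (simp add: Lambda_pow_def exp_Lambda_def norm_mult gG_def)

lemma gG_nonneg: "0 \<le> gG r b eta k" by (simp add: gG_def)

lemma pointwise:
  assumes e0: "eta (0,0) = 0" and b: "b \<ge> 0" and r: "r \<ge> 1"
  shows "h0 eta k j * gG r b eta k \<le> 2 powr r * (P1f b eta j * A1f r b eta (sub k j) * A1f r b eta k
            + A0f r b eta j * Q2f b eta (sub k j) * A1f r b eta k)"
proof -
  define l where "l = sub k j"
  have R0: "0 \<le> 2 powr r * (P1f b eta j * A1f r b eta l * A1f r b eta k + A0f r b eta j * Q2f b eta l * A1f r b eta k)"
    by (simp add: P1_nonneg A1_nonneg A0_nonneg Q2_nonneg)
  show ?thesis
  proof (cases "j = (0,0) \<or> l = (0,0) \<or> k = (0,0)")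
    case True
    hence z: "h0 eta k j * gG r b eta k = 0" using e0 r by (auto simp: h0_def gG_def l_def[symmetric])
    show ?thesis by (subst z) (use R0 in \<open>simp add: l_def\<close>)
  next
    case False
    hence nz: "j \<noteq> (0,0)" "l \<noteq> (0,0)" "k \<noteq> (0,0)" by auto
    define nj nl nk where "nj = knorm j" and "nl = knorm l" and "nk = knorm k"
    define aj al ak where "aj = cmod (eta j)" and "al = cmod (eta l)" and "ak = cmod (eta k)"
    define ej el ek where "ej = exp (b*nj)" and "el = exp (b*nl)" and "ek = exp (b*nk)"
    have nj1: "1 \<le> nj" and nl1: "1 \<le> nl" and nk1: "1 \<le> nk"
      using knorm_ge1 nz by (auto simp: nj_def nl_def nk_def)
    have tri: "nk \<le> nj + nl" unfolding nj_def nl_def nk_def l_def by (rule knorm_triangle)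
    have ex: "exp (2*b*nk) \<le> ej * el * ek"
    proof -
      have "b*nk \<le> b*(nj + nl)" using tri b by (rule mult_left_mono)
      hence "2*b*nk \<le> b*nj + b*nl + b*nk" by (simp add: algebra_simps)
      hence "exp (2*b*nk) \<le> exp (b*nj + b*nl + b*nk)" by simp
      also have "\<dots> = ej * el * ek" by (simp add: ej_def el_def ek_def exp_add)
      finally show ?thesis .
    qed
    have key: "nl * nk powr (2*r) \<le> 2 powr r * (nl powr (r+1/2) * nk powr (r+1/2) + nj powr r * nl powr (1/2) * nk powr (r+1/2))"
      using key_ineq[OF tri nj1 nl1 _ r] nk1 by simp
    have M0: "0 \<le> aj * al * ak" by (simp add: aj_def al_def ak_def)
    have "h0 eta k j * gG r b eta k = (aj * al * ak) * (nl * nk powr (2*r)) * exp (2*b*nk)"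
      by (simp add: h0_def gG_def l_def[symmetric] aj_def al_def ak_def nl_def nk_def algebra_simps)
    also have "\<dots> \<le> (aj * al * ak) * (2 powr r * (nl powr (r+1/2) * nk powr (r+1/2) + nj powr r * nl powr (1/2) * nk powr (r+1/2))) * (ej * el * ek)"
      by (rule mult_mono[OF mult_left_mono[OF key M0] ex]) (use M0 in auto)
    also have "\<dots> = 2 powr r * (P1f b eta j * A1f r b eta l * A1f r b eta k + A0f r b eta j * Q2f b eta l * A1f r b eta k)"
      by (simp add: P1f_def A1f_def A0f_def Q2f_def aj_def al_def ak_def ej_def el_def ek_def nj_def nl_def nk_def algebra_simps)
    finally show ?thesis by (simp add: l_def)
  qed
qed

lemma P1_A0: "(\<lambda>x. (knorm x powr r * P1f b eta x)\<^sup>2) = (\<lambda>x. (A0f r b eta x)\<^sup>2)"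
  by (simp add: P1f_def A0f_def mult.assoc)

lemma Q2_A1: "(\<lambda>x. (knorm x powr r * Q2f b eta x)\<^sup>2) = (\<lambda>x. (A1f r b eta x)\<^sup>2)"
proof -
  have "knorm x powr r * Q2f b eta x = A1f r b eta x" for x
  proof -
    have "knorm x powr r * knorm x powr (1/2) = knorm x powr (r + 1/2)" by (rule powr_add[symmetric])
    thus ?thesis unfolding Q2f_def A1f_def by (metis mult.assoc)
  qed
  thus ?thesis by simp
qed

lemma P1_0: "eta (0,0) = 0 \<Longrightarrow> P1f b eta (0,0) = 0" by (simp add: P1f_def)
lemma Q2_0: "Q2f b eta (0,0) = 0" by (simp add: Q2f_def)

lemma core:
  assumes r: "r > 3/2" and b: "b > 0" and e0: "eta (0,0) = 0"
    and s0: "(\<lambda>x. (A0f r b eta x)\<^sup>2) summable_on UNIV" and s1: "(\<lambda>x. (A1f r b eta x)\<^sup>2) summable_on UNIV"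
  shows "cmod (infsum (\<lambda>k. advect (\<lambda>k. - riesz2 eta k) (riesz1 eta) eta k * cnj (Lambda_pow (2*r) (exp_Lambda (2*b) eta) k)) UNIV)
     \<le> 2 * 2 powr r * sqrt Z3 * sqrt (infsum (\<lambda>x. (A0f r b eta x)\<^sup>2) UNIV) * infsum (\<lambda>x. (A1f r b eta x)\<^sup>2) UNIV"
proof -
  define X where "X = (\<lambda>k. advect (\<lambda>k. - riesz2 eta k) (riesz1 eta) eta k)"
  define Gc where "Gc = (\<lambda>k. Lambda_pow (2*r) (exp_Lambda (2*b) eta) k)"
  define N0 where "N0 = infsum (\<lambda>x. (A0f r b eta x)\<^sup>2) UNIV"
  define N1 where "N1 = infsum (\<lambda>x. (A1f r b eta x)\<^sup>2) UNIV"
  define Bnd where "Bnd = 2 * 2 powr r * sqrt Z3 * sqrt N0 * N1"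
  have N00: "0 \<le> N0" unfolding N0_def by (intro infsum_nonneg) auto
  have N10: "0 \<le> N1" unfolding N1_def by (intro infsum_nonneg) auto
  have Bnd0: "0 \<le> Bnd" unfolding Bnd_def using N00 N10 Z3_nonneg by simp
  have hs: "h0 eta k summable_on UNIV" for k
    using h0_summable[OF e0 _ _ s0 s1] b r by simp
  have JK: "(\<Sum>j\<in>J. \<Sum>k\<in>K. h0 eta k j * gG r b eta k) \<le> Bnd" if J: "finite J" and K: "finite K" for J K
  proof -
    define F where "F = J \<times> K"
    have F: "finite F" using J K by (simp add: F_def)
    have "(\<Sum>j\<in>J. \<Sum>k\<in>K. h0 eta k j * gG r b eta k) = (\<Sum>(j,k)\<in>F. h0 eta k j * gG r b eta k)"
      unfolding F_def by (simp add: sum.cartesian_product)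
    also have "\<dots> \<le> (\<Sum>(j,k)\<in>F. 2 powr r * (P1f b eta j * A1f r b eta (sub k j) * A1f r b eta k
            + A0f r b eta j * Q2f b eta (sub k j) * A1f r b eta k))"
      using e0 b r by (intro sum_mono) (auto intro: pointwise)
    also have "\<dots> = 2 powr r * ((\<Sum>(j,k)\<in>F. P1f b eta j * A1f r b eta (sub k j) * A1f r b eta k)
            + (\<Sum>(j,k)\<in>F. A0f r b eta j * Q2f b eta (sub k j) * A1f r b eta k))"
      by (simp only: split_def distrib_left sum_distrib_left sum.distrib)
    also have "\<dots> \<le> 2 powr r * (sqrt Z3 * sqrt N0 * N1 + sqrt Z3 * sqrt N0 * N1)"
    proof -
      have t1: "(\<Sum>(j,k)\<in>F. P1f b eta j * A1f r b eta (sub k j) * A1f r b eta k) \<le> sqrt Z3 * sqrt N0 * N1"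
      proof -
        have sP: "(\<lambda>x. (knorm x powr r * P1f b eta x)\<^sup>2) summable_on UNIV" unfolding P1_A0 by (rule s0)
        have "r \<ge> 3/2" using r by simp
        from T1gen[of F "P1f b eta" "A1f r b eta" r, OF F P1_nonneg A1_nonneg P1_0[of eta b, OF e0] sP s1 this]
        show ?thesis unfolding P1_A0 N0_def N1_def .
      qed
      have t2: "(\<Sum>(j,k)\<in>F. A0f r b eta j * Q2f b eta (sub k j) * A1f r b eta k)
          \<le> sqrt (Z3 * N1) * sqrt (N0 * N1)"
      proof -
        have sQ: "(\<lambda>x. (knorm x powr r * Q2f b eta x)\<^sup>2) summable_on UNIV" unfolding Q2_A1 by (rule s1)
        have "r \<ge> 3/2" using r by simp
        from T2gen[of F "Q2f b eta" "A0f r b eta" "A1f r b eta" r, OF F Q2_nonneg A0_nonneg A1_nonneg Q2_0 sQ s0 s1 this]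
        show ?thesis unfolding Q2_A1 N0_def N1_def .
      qed
      have "sqrt (Z3 * N1) * sqrt (N0 * N1) = sqrt Z3 * sqrt N0 * N1"
        using N10 by (simp add: real_sqrt_mult algebra_simps)
      with t1 t2 show ?thesis by (intro mult_left_mono add_mono) auto
    qed
    also have "\<dots> = Bnd" unfolding Bnd_def by simp
    finally show ?thesis .
  qed
  have fin: "(\<Sum>k\<in>K. cmod (X k) * gG r b eta k) \<le> Bnd" if K: "finite K" for K
  proof -
    have "(\<Sum>k\<in>K. cmod (X k) * gG r b eta k) \<le> (\<Sum>k\<in>K. infsum (h0 eta k) UNIV * gG r b eta k)"
      unfolding X_def using X_bound[OF hs] by (intro sum_mono mult_right_mono) (auto simp: gG_nonneg)
    also have "\<dots> = (\<Sum>k\<in>K. infsum (\<lambda>j. h0 eta k j * gG r b eta k) UNIV)"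
      by (simp add: infsum_cmult_left')
    also have "\<dots> = infsum (\<lambda>j. \<Sum>k\<in>K. h0 eta k j * gG r b eta k) UNIV"
      using K hs by (intro infsum_sum_finite(1)) (auto intro: summable_on_cmult_left)
    also have "\<dots> \<le> Bnd"
    proof (rule infsum_le_finite_sums)
      show "(\<lambda>j. \<Sum>k\<in>K. h0 eta k j * gG r b eta k) summable_on UNIV"
        using K hs by (intro infsum_sum_finite(2)) (auto intro: summable_on_cmult_left)
      fix J :: "(int \<times> int) set" assume "finite J"
      thus "(\<Sum>j\<in>J. \<Sum>k\<in>K. h0 eta k j * gG r b eta k) \<le> Bnd" using JK K by blast
    qed
    finally show ?thesis .
  qed
  show ?thesis
  proof (cases "(\<lambda>k. X k * cnj (Gc k)) summable_on UNIV")
    case True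
    have a: "(\<lambda>k. norm (X k * cnj (Gc k))) summable_on UNIV"
      using summable_on_iff_abs_summable_on_complex[THEN iffD1, OF True] .
    have "cmod (infsum (\<lambda>k. X k * cnj (Gc k)) UNIV) \<le> infsum (\<lambda>k. norm (X k * cnj (Gc k))) UNIV"
      using a by (rule norm_infsum_bound)
    also have "\<dots> \<le> Bnd"
    proof (rule infsum_le_finite_sums[OF a])
      fix K :: "(int \<times> int) set" assume K: "finite K"
      have "(\<Sum>k\<in>K. norm (X k * cnj (Gc k))) = (\<Sum>k\<in>K. cmod (X k) * gG r b eta k)"
        by (simp add: norm_mult Gc_def normG)
      thus "(\<Sum>k\<in>K. norm (X k * cnj (Gc k))) \<le> Bnd" using fin[OF K] by simp
    qed
    finally show ?thesis unfolding X_def Gc_def Bnd_def N0_def N1_def .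
  next
    case False
    hence "infsum (\<lambda>k. X k * cnj (Gc k)) UNIV = 0" by (rule infsum_not_exists)
    thus ?thesis using Bnd0 unfolding X_def Gc_def Bnd_def N0_def N1_def by simp
  qed
qed

lemma CW_ge: assumes "r > 3/2" shows "1 \<le> 2 * pi * C_W r"
proof -
  have "2 * pi * C_W r = (2*r-2)/(2*r-3)" unfolding C_W_def by simp
  also have "1 \<le> (2*r-2)/(2*r-3)" using assms by (simp add: le_divide_eq)
  finally show ?thesis by simp
qed

theorem mainTheorem5:
  "\<exists>C>0. \<forall>r b (eta :: int \<times> int \<Rightarrow> complex).
     r > 3/2 \<longrightarrow> b > 0 \<longrightarrow> eta (0,0) = 0 \<longrightarrow>
     (\<lambda>k. knorm k powr (2*r) * exp (2*b*knorm k) * (cmod (Lambda_pow (1/2) eta k))\<^sup>2)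
        summable_on (-{(0,0)}) \<longrightarrow>
     cmod (l2_inner (advect (\<lambda>k. - riesz2 eta k) (riesz1 eta) eta)
                    (Lambda_pow (2*r) (exp_Lambda (2*b) eta)))
       \<le> C * 2 powr r * C_W r * gev_norm r b eta * (gev_norm r b (Lambda_pow (1/2) eta))\<^sup>2"
proof (intro exI[where x="2 * sqrt Z3 + 1"] conjI allI impI)
  show "0 < 2 * sqrt Z3 + 1" using Z3_nonneg by (simp add: add_nonneg_pos)
  fix r b :: real and eta :: "int \<times> int \<Rightarrow> complex"
  assume r: "r > 3/2" and b: "b > 0" and e0: "eta (0,0) = 0"
    and hyp: "(\<lambda>k. knorm k powr (2*r) * exp (2*b*knorm k) * (cmod (Lambda_pow (1/2) eta k))\<^sup>2) summable_on (-{(0,0)})"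
  define C where "C = 2 * sqrt Z3 + 1"
  define N0 where "N0 = infsum (\<lambda>x. (A0f r b eta x)\<^sup>2) UNIV"
  define N1 where "N1 = infsum (\<lambda>x. (A1f r b eta x)\<^sup>2) UNIV"
  have A10: "A1f r b eta (0,0) = 0" using r by (simp add: A1f_def)
  have A00: "A0f r b eta (0,0) = 0" using r by (simp add: A0f_def)
  have s1: "(\<lambda>x. (A1f r b eta x)\<^sup>2) summable_on UNIV"
  proof -
    have "(\<lambda>x. (A1f r b eta x)\<^sup>2) summable_on UNIV \<longleftrightarrow>
      (\<lambda>k. knorm k powr (2*r) * exp (2*b*knorm k) * (cmod (Lambda_pow (1/2) eta k))\<^sup>2) summable_on (-{(0,0)})"
      by (rule summable_on_cong_neutral) (auto simp: hyp_eq A10)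
    thus ?thesis using hyp by simp
  qed
  have s0: "(\<lambda>x. (A0f r b eta x)\<^sup>2) summable_on UNIV"
    by (rule summable_on_comparison_test[OF s1]) (auto intro: power_mono A0_le_A1 A0_nonneg)
  have g1: "gev_norm_sq r b (Lambda_pow (1/2) eta) = (2*pi)\<^sup>2 * N1"
  proof -
    have "infsum (\<lambda>k. knorm k powr (2*r) * exp (2*b*knorm k) * (cmod (Lambda_pow (1/2) eta k))\<^sup>2) (-{(0,0)}) = N1"
      unfolding N1_def by (rule infsum_cong_neutral) (auto simp: hyp_eq A10)
    thus ?thesis unfolding gev_norm_sq_def by simp
  qed
  have g0: "gev_norm_sq r b eta = (2*pi)\<^sup>2 * N0"
  proof -
    have "infsum (\<lambda>k. knorm k powr (2*r) * exp (2*b*knorm k) * (cmod (eta k))\<^sup>2) (-{(0,0)}) = N0"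
      unfolding N0_def by (rule infsum_cong_neutral) (auto simp: gev_eq A00)
    thus ?thesis unfolding gev_norm_sq_def by simp
  qed
  have N00: "0 \<le> N0" unfolding N0_def by (intro infsum_nonneg) auto
  have N10: "0 \<le> N1" unfolding N1_def by (intro infsum_nonneg) auto
  have gn0: "gev_norm r b eta = 2*pi * sqrt N0"
    unfolding gev_norm_def g0 by (simp add: real_sqrt_mult)
  have gn1: "(gev_norm r b (Lambda_pow (1/2) eta))\<^sup>2 = (2*pi)\<^sup>2 * N1"
    unfolding gev_norm_def g1 using N10 by simp
  define S where "S = infsum (\<lambda>k. advect (\<lambda>k. - riesz2 eta k) (riesz1 eta) eta k * cnj (Lambda_pow (2*r) (exp_Lambda (2*b) eta) k)) UNIV"
  have cS: "cmod S \<le> 2 * 2 powr r * sqrt Z3 * sqrt N0 * N1"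
    unfolding S_def N0_def N1_def using core[OF r b e0 s0 s1] .
  have lhs: "cmod (l2_inner (advect (\<lambda>k. - riesz2 eta k) (riesz1 eta) eta) (Lambda_pow (2*r) (exp_Lambda (2*b) eta)))
      = (2*pi)\<^sup>2 * cmod S"
    unfolding l2_inner_def S_def by (simp add: norm_mult norm_power)
  define Q where "Q = 2 powr r * sqrt N0 * N1 * (2*pi)\<^sup>2"
  have Q0: "0 \<le> Q" unfolding Q_def using N00 N10 by simp
  have "(2*pi)\<^sup>2 * cmod S \<le> (2*pi)\<^sup>2 * (2 * 2 powr r * sqrt Z3 * sqrt N0 * N1)"
    using cS by (intro mult_left_mono) auto
  also have "\<dots> = (2 * sqrt Z3) * Q" unfolding Q_def by (simp add: algebra_simps)
  also have "\<dots> \<le> C * Q" unfolding C_def using Q0 by (intro mult_right_mono) auto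
  also have "\<dots> \<le> C * (2 * pi * C_W r) * Q"
  proof -
    have "C * 1 \<le> C * (2 * pi * C_W r)" using CW_ge[OF r] Z3_nonneg unfolding C_def by (intro mult_left_mono) auto
    thus ?thesis using Q0 by (intro mult_right_mono) auto
  qed
  also have "\<dots> = C * 2 powr r * C_W r * gev_norm r b eta * (gev_norm r b (Lambda_pow (1/2) eta))\<^sup>2"
    unfolding gn0 gn1 Q_def by (simp add: algebra_simps)
  finally show "cmod (l2_inner (advect (\<lambda>k. - riesz2 eta k) (riesz1 eta) eta) (Lambda_pow (2*r) (exp_Lambda (2*b) eta)))
       \<le> (2 * sqrt Z3 + 1) * 2 powr r * C_W r * gev_norm r b eta * (gev_norm r b (Lambda_pow (1/2) eta))\<^sup>2"
    unfolding lhs C_def .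
qed

end
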